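(* Let $a\in\mathbf F^{\uparrow}$ with $\mathrm{supp}(a)=(0,r)$, let $\alpha_0\in(0,r)\cap A$, $\alpha_k=(\alpha_0)a^k$ ($k\in\mathbb Z$), and $b\in\mathbf F^{\uparrow}$ with $\mathrm{supp}(b)=(\alpha_0,\alpha_1)$. Let $d\in\mathbf F_{(\alpha_0,\alpha_1)}$ be such that the centralizer of $b$ in $\mathbf F_{(\alpha_0,\alpha_1)}$ equals $\langle d\rangle$. Then the centralizer of the set $\{a^{-k}ba^k\mid k\in\mathbb Z\}$ in $\mathbf F$ is the subgroup generated by $\{a^{-k}da^k\mid k\in\mathbb Z\}$.
   Context: Maps act on the right. Fix real $r>0$, a subgroup $\Lambda\neq\{1\}$ of $\mathbb R^*_+$, and an additive subgroup $A\subseteq\mathbb R$ with $r\in A$ and $\lambda A\subseteq A$ for $\lambda\in\Lambda$. $\mathbf F=\mathbf F(r,\Lambda,A)$ is the group of homeomorphisms $x\colon[0,r)\to[0,r)$ that are piecewise affine with finitely many breakpoints, all slopes in $\Lambda$, and all breakpoints and their images in $A$. $\mathbf F^{\uparrow}=\{x\in\mathbf F\mid(\gamma)x\ge\gamma\ \forall\gamma\}$; $\mathrm{supp}(x)$ is the set of non-fixed points; for $S\subseteq[0,r)$, $\mathbf F_S=\{x\in\mathbf F\mid\mathrm{supp}(x)\subseteq S\}$. *)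

theory Defs
  imports "HOL-Analysis.Analysis" "HOL-Algebra.Generated_Groups"
begin

text \<open>Elements of F(r,Lambda,A) are represented as functions real => real which are the
identity outside [0,r).  A finite set P of cut points (containing 0, contained in A and [0,r),
with images in A) is given such that on each interval [p, next point of P) the map is affine
with slope in Lambda.  The true breakpoints form a subset of such a P.\<close>

definition PLF :: "real \<Rightarrow> real set \<Rightarrow> real set \<Rightarrow> (real \<Rightarrow> real) set" where
  "PLF r \<Lambda> A = {x.
     (\<exists>y. homeomorphism {0..<r} {0..<r} x y) \<and>
     (\<forall>t. t \<notin> {0..<r} \<longrightarrow> x t = t) \<and>
     (\<exists>P. finite P \<and> P \<subseteq> A \<inter> {0..<r} \<and> 0 \<in> P \<and> x ` P \<subseteq> A \<and>
        (\<forall>p\<in>P. \<exists>l\<in>\<Lambda>. \<forall>t\<in>{p..<r}. (\<forall>q\<in>P. q \<le> p \<or> t < q) \<longrightarrow> x t = x p + l * (t - p)))}"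

text \<open>Maps act on the right: the product x y means first x, then y, i.e. y \<circ> x.\<close>
definition PLFgroup :: "real \<Rightarrow> real set \<Rightarrow> real set \<Rightarrow> (real \<Rightarrow> real) monoid" where
  "PLFgroup r \<Lambda> A = \<lparr>carrier = PLF r \<Lambda> A, mult = (\<lambda>x y. y \<circ> x), one = id\<rparr>"

definition supp :: "(real \<Rightarrow> real) \<Rightarrow> real set" where
  "supp x = {t. x t \<noteq> t}"

definition PLF_up :: "real \<Rightarrow> real set \<Rightarrow> real set \<Rightarrow> (real \<Rightarrow> real) set" where
  "PLF_up r \<Lambda> A = {x \<in> PLF r \<Lambda> A. \<forall>t\<in>{0..<r}. x t \<ge> t}"

definition PLF_on :: "real \<Rightarrow> real set \<Rightarrow> real set \<Rightarrow> real set \<Rightarrow> (real \<Rightarrow> real) set" where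
  "PLF_on r \<Lambda> A S = {x \<in> PLF r \<Lambda> A. supp x \<subseteq> S}"

definition centralizer :: "('a, 'b) monoid_scheme \<Rightarrow> 'a set \<Rightarrow> 'a set \<Rightarrow> 'a set" where
  "centralizer G H X = {g \<in> H. \<forall>x\<in>X. g \<otimes>\<^bsub>G\<^esub> x = x \<otimes>\<^bsub>G\<^esub> g}"

end

theory Submission
  imports Defs
begin

lemma restr_cont:
  fixes c :: "real \<Rightarrow> real"
  assumes c: "continuous_on S c" and cu: "c u = u" and cv: "c v = v" and uv: "u \<le> v"
  shows "continuous_on S (\<lambda>t. if u \<le> t \<and> t < v then c t else t)"
proof -
  define F where "F t = (if t \<le> v then c t else t)" for t
  have cF: "continuous_on {t \<in> S. u \<le> t} F"
    unfolding F_def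
  proof (rule continuous_on_cases_le[where h="\<lambda>t. t" and a=v])
    show "continuous_on {x \<in> {t \<in> S. u \<le> t}. x \<le> v} c" by (rule continuous_on_subset[OF c]) auto
    show "continuous_on {x \<in> {t \<in> S. u \<le> t}. v \<le> x} (\<lambda>x. x)" by (rule continuous_on_id)
    show "continuous_on {t \<in> S. u \<le> t} (\<lambda>t. t)" by (rule continuous_on_id)
    show "\<And>x. x \<in> {t\<in>S. u\<le>t} \<Longrightarrow> x = v \<Longrightarrow> c x = x" using cv by simp
  qed
  have cf: "continuous_on S (\<lambda>t. if t \<le> u then t else F t)"
  proof (rule continuous_on_cases_le[where h="\<lambda>t. t" and a=u])
    show "continuous_on {x \<in> S. x \<le> u} (\<lambda>x. x)" by (rule continuous_on_id)
    show "continuous_on {x \<in> S. u \<le> x} F" by (rule cF)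
    show "continuous_on S (\<lambda>t. t)" by (rule continuous_on_id)
    show "\<And>x. x \<in> S \<Longrightarrow> x = u \<Longrightarrow> x = F x" using cu uv by (simp add: F_def)
  qed
  have eq: "(\<lambda>t. if t \<le> u then t else F t) = (\<lambda>t. if u \<le> t \<and> t < v then c t else t)"
  proof
    fix t show "(if t \<le> u then t else F t) = (if u \<le> t \<and> t < v then c t else t)"
      using cu cv uv by (auto simp: F_def)
  qed
  show ?thesis using cf unfolding eq .
qed

lemma conj_mem:
  fixes g g' :: "real \<Rightarrow> real"
  assumes "strict_mono g" "\<And>t. g (g' t) = t"
  shows "g' t \<in> {u<..<v} \<longleftrightarrow> t \<in> {g u<..<g v}"
  using assms by (metis greaterThanLessThan_iff strict_mono_less)

lemma disj_comm:
  fixes f g :: "real \<Rightarrow> real"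
  assumes "inj f" "inj g" "supp f \<inter> supp g = {}"
  shows "f \<circ> g = g \<circ> f"
proof
  fix t
  have sf: "\<And>s. s \<in> supp f \<Longrightarrow> f s \<in> supp f"
    using assms(1) unfolding supp_def by (auto dest: injD)
  have sg: "\<And>s. s \<in> supp g \<Longrightarrow> g s \<in> supp g"
    using assms(2) unfolding supp_def by (auto dest: injD)
  show "(f \<circ> g) t = (g \<circ> f) t"
  proof (cases "t \<in> supp f")
    case True
    then have "g t = t" "g (f t) = f t" using assms(3) sf[OF True] unfolding supp_def by auto
    then show ?thesis by simp
  next
    case False
    then have ft: "f t = t" unfolding supp_def by auto
    show ?thesis
    proof (cases "t \<in> supp g")
      case True
      then have "f (g t) = g t" using assms(3) sg[OF True] unfolding supp_def by auto
      then show ?thesis using ft by simp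
    next
      case False
      then show ?thesis using ft unfolding supp_def by auto
    qed
  qed
qed

lemma fix_left:
  fixes c c' :: "real \<Rightarrow> real"
  assumes sm: "strict_mono c" and cc': "\<And>t. c (c' t) = t" and uv: "u < v"
    and iff: "\<And>t. c t \<in> {u<..<v} \<longleftrightarrow> t \<in> {u<..<v}"
  shows "\<not> u < c u"
proof
  assume cu: "u < c u"
  define t where "t = (u + min (c u) v) / 2"
  have t: "u < t" "t < v" "t < c u" using cu uv by (auto simp: t_def)
  have "c (c' t) \<in> {u<..<v}" using t cc' by simp
  then have "c' t \<in> {u<..<v}" using iff by blast
  then have "c u < c (c' t)" using sm strict_monoD by auto
  then show False using cc' t by simp
qed

lemma fix_point:
  fixes c c' :: "real \<Rightarrow> real"
  assumes sm: "strict_mono c" and sm': "strict_mono c'" and cc': "\<And>t. c (c' t) = t"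
    and c'c: "\<And>t. c' (c t) = t" and uv: "u < v"
    and iff: "\<And>t. c t \<in> {u<..<v} \<longleftrightarrow> t \<in> {u<..<v}"
  shows "c u = u"
proof -
  have 1: "\<not> u < c u" by (rule fix_left[OF sm cc' uv iff])
  have iff': "\<And>t. c' t \<in> {u<..<v} \<longleftrightarrow> t \<in> {u<..<v}" using iff cc' by metis
  have 2: "\<not> u < c' u" by (rule fix_left[OF sm' c'c uv iff'])
  have "\<not> c u < u"
  proof
    assume "c u < u"
    then have "c' (c u) < c' u" using sm' strict_monoD by blast
    then show False using 2 c'c by simp
  qed
  then show ?thesis using 1 by simp
qed

lemma (in group) cancel_simps:
  assumes "x \<in> carrier G" "y \<in> carrier G"
  shows "x \<otimes> (inv x \<otimes> y) = y" "inv x \<otimes> (x \<otimes> y) = y"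
  using assms by (simp_all add: m_assoc[symmetric])

lemma (in group) comm_inv:
  assumes "h \<in> carrier G" "x \<in> carrier G" "h \<otimes> x = x \<otimes> h"
  shows "inv h \<otimes> x = x \<otimes> inv h"
proof -
  have "inv h \<otimes> x = inv h \<otimes> (x \<otimes> h) \<otimes> inv h" using assms(1,2) by (simp add: m_assoc)
  also have "\<dots> = inv h \<otimes> (h \<otimes> x) \<otimes> inv h" by (simp only: assms(3))
  also have "\<dots> = x \<otimes> inv h" using assms(1,2) by (simp add: m_assoc cancel_simps)
  finally show ?thesis .
qed

lemma (in group) comm_conj:
  assumes "g \<in> carrier G" "y \<in> carrier G" "z \<in> carrier G" "y \<otimes> z = z \<otimes> y"
  shows "(inv g \<otimes> y \<otimes> g) \<otimes> (inv g \<otimes> z \<otimes> g) = (inv g \<otimes> z \<otimes> g) \<otimes> (inv g \<otimes> y \<otimes> g)"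
proof -
  have "(inv g \<otimes> y \<otimes> g) \<otimes> (inv g \<otimes> z \<otimes> g) = inv g \<otimes> (y \<otimes> z) \<otimes> g"
    using assms(1-3) by (simp add: m_assoc cancel_simps)
  also have "\<dots> = inv g \<otimes> (z \<otimes> y) \<otimes> g" by (simp only: assms(4))
  also have "\<dots> = (inv g \<otimes> z \<otimes> g) \<otimes> (inv g \<otimes> y \<otimes> g)"
    using assms(1-3) by (simp add: m_assoc cancel_simps)
  finally show ?thesis .
qed

lemma (in group) conj_back:
  assumes "g \<in> carrier G" "y \<in> carrier G"
  shows "inv g \<otimes> (g \<otimes> y \<otimes> inv g) \<otimes> g = y" "g \<otimes> (inv g \<otimes> y \<otimes> g) \<otimes> inv g = y"
  using assms by (simp_all add: m_assoc cancel_simps)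

lemma (in group) comm_conj2:
  assumes "g \<in> carrier G" "y \<in> carrier G" "z \<in> carrier G"
    and "y \<otimes> (inv g \<otimes> z \<otimes> g) = (inv g \<otimes> z \<otimes> g) \<otimes> y"
  shows "(g \<otimes> y \<otimes> inv g) \<otimes> z = z \<otimes> (g \<otimes> y \<otimes> inv g)"
proof -
  have "(inv (inv g) \<otimes> y \<otimes> inv g) \<otimes> (inv (inv g) \<otimes> (inv g \<otimes> z \<otimes> g) \<otimes> inv g)
      = (inv (inv g) \<otimes> (inv g \<otimes> z \<otimes> g) \<otimes> inv g) \<otimes> (inv (inv g) \<otimes> y \<otimes> inv g)"
    by (rule comm_conj) (use assms in auto)
  then show ?thesis using assms conj_back by simp
qed

lemma (in group) conj_generate:
  assumes "g \<in> carrier G" "d \<in> carrier G" "e \<in> generate G {d}"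
  shows "inv g \<otimes> e \<otimes> g \<in> generate G {inv g \<otimes> d \<otimes> g}"
  using assms(3)
proof (induction rule: generate.induct)
  case one
  then show ?case using assms by (simp add: generate.one)
next
  case (incl h)
  then show ?case by (auto intro: generate.incl)
next
  case (inv h)
  then have "inv g \<otimes> inv h \<otimes> g = inv (inv g \<otimes> h \<otimes> g)"
    using assms by (simp add: inv_mult_group m_assoc)
  then show ?case using generate.inv[of "inv g \<otimes> h \<otimes> g" "{inv g \<otimes> d \<otimes> g}" G] inv.hyps by auto
next
  case (eng h1 h2)
  have c: "h1 \<in> carrier G" "h2 \<in> carrier G"
    using eng.hyps generate_in_carrier[of "{d}"] assms by auto
  have "inv g \<otimes> (h1 \<otimes> h2) \<otimes> g = (inv g \<otimes> h1 \<otimes> g) \<otimes> (inv g \<otimes> h2 \<otimes> g)"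
    using assms c by (simp add: m_assoc cancel_simps)
  then show ?case using generate.eng[OF eng.IH] by simp
qed

locale plf =
  fixes r :: real and \<Lambda> A :: "real set"
  assumes r_pos: "r > 0"
    and Lam_pos: "\<Lambda> \<subseteq> {0<..}" and Lam_one: "1 \<in> \<Lambda>"
    and Lam_mult: "\<And>l m. l \<in> \<Lambda> \<Longrightarrow> m \<in> \<Lambda> \<Longrightarrow> l * m \<in> \<Lambda>"
    and Lam_inv: "\<And>l. l \<in> \<Lambda> \<Longrightarrow> inverse l \<in> \<Lambda>"
    and A_zero: "0 \<in> A"
    and A_add: "\<And>x y. x \<in> A \<Longrightarrow> y \<in> A \<Longrightarrow> x + y \<in> A"
    and A_uminus: "\<And>x. x \<in> A \<Longrightarrow> - x \<in> A"
    and A_scale: "\<And>l x. l \<in> \<Lambda> \<Longrightarrow> x \<in> A \<Longrightarrow> l * x \<in> A"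
begin

definition cutset :: "(real \<Rightarrow> real) \<Rightarrow> real set \<Rightarrow> bool" where
  "cutset x P \<longleftrightarrow> finite P \<and> P \<subseteq> A \<inter> {0..<r} \<and> 0 \<in> P \<and> x ` P \<subseteq> A \<and>
        (\<forall>p\<in>P. \<exists>l\<in>\<Lambda>. \<forall>t\<in>{p..<r}. (\<forall>q\<in>P. q \<le> p \<or> t < q) \<longrightarrow> x t = x p + l * (t - p))"

lemma A_diff: "x \<in> A \<Longrightarrow> y \<in> A \<Longrightarrow> x - y \<in> A"
  using A_add A_uminus by (metis diff_conv_add_uminus)

lemma PLF_iff: "x \<in> PLF r \<Lambda> A \<longleftrightarrow> (\<exists>y. homeomorphism {0..<r} {0..<r} x y) \<and>
     (\<forall>t. t \<notin> {0..<r} \<longrightarrow> x t = t) \<and> (\<exists>P. cutset x P)"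
  unfolding PLF_def cutset_def by auto

lemma cut_max:
  assumes "cutset x P" "s \<ge> 0"
  shows "\<exists>p\<in>P. p \<le> s \<and> (\<forall>q\<in>P. q \<le> s \<longrightarrow> q \<le> p)"
proof -
  let ?S = "{q\<in>P. q \<le> s}"
  have f: "finite ?S" "?S \<noteq> {}" using assms unfolding cutset_def by auto
  show ?thesis
    by (rule bexI[of _ "Max ?S"]) (use f Max_in[OF f] Max_ge[OF f(1)] in auto)
qed

lemma cut_local:
  assumes "cutset x P" "s \<in> {0..<r}"
  shows "\<exists>l\<in>\<Lambda>. \<forall>t\<in>{s..<r}. (\<forall>q\<in>P. q \<le> s \<or> t < q) \<longrightarrow> x t = x s + l * (t - s)"
proof -
  obtain p where p: "p \<in> P" "p \<le> s" "\<forall>q\<in>P. q \<le> s \<longrightarrow> q \<le> p"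
    using cut_max[OF assms(1)] assms(2) by auto
  obtain l where l: "l \<in> \<Lambda>" "\<forall>t\<in>{p..<r}. (\<forall>q\<in>P. q \<le> p \<or> t < q) \<longrightarrow> x t = x p + l * (t - p)"
    using assms(1) p(1) unfolding cutset_def by blast
  have xs: "x s = x p + l * (s - p)"
    using l(2) p assms(2) by force
  show ?thesis
  proof (intro bexI[OF _ l(1)] ballI impI)
    fix t assume t: "t \<in> {s..<r}" "\<forall>q\<in>P. q \<le> s \<or> t < q"
    have "x t = x p + l * (t - p)" using l(2) t p by force
    then show "x t = x s + l * (t - s)" using xs by (simp add: algebra_simps)
  qed
qed

lemma PLF_A:
  assumes "x \<in> PLF r \<Lambda> A" "s \<in> A" "s \<in> {0..<r}"
  shows "x s \<in> A"
proof -
  obtain P where P: "cutset x P" using assms PLF_iff by auto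
  obtain p where p: "p \<in> P" "p \<le> s" "\<forall>q\<in>P. q \<le> s \<longrightarrow> q \<le> p"
    using cut_max[OF P] assms(3) by auto
  obtain l where l: "l \<in> \<Lambda>" "\<forall>t\<in>{p..<r}. (\<forall>q\<in>P. q \<le> p \<or> t < q) \<longrightarrow> x t = x p + l * (t - p)"
    using P p(1) unfolding cutset_def by blast
  have xs: "x s = x p + l * (s - p)"
    using l(2) p assms(3) by force
  have "p \<in> A" "x p \<in> A" using P p(1) unfolding cutset_def by auto
  then show ?thesis unfolding xs using A_add A_scale A_diff assms(2) l(1) by auto
qed

lemma PLF_homeo: "x \<in> PLF r \<Lambda> A \<Longrightarrow> \<exists>y. homeomorphism {0..<r} {0..<r} x y"
  using PLF_iff by auto

lemma PLF_out: "x \<in> PLF r \<Lambda> A \<Longrightarrow> t \<notin> {0..<r} \<Longrightarrow> x t = t"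
  using PLF_iff by auto

lemma PLF_image: "x \<in> PLF r \<Lambda> A \<Longrightarrow> x ` {0..<r} = {0..<r}"
  using PLF_homeo unfolding homeomorphism_def by blast

lemma PLF_smono_on:
  assumes "x \<in> PLF r \<Lambda> A"
  shows "strict_mono_on {0..<r} x"
proof -
  obtain y where h: "homeomorphism {0..<r} {0..<r} x y" using PLF_homeo[OF assms] by auto
  have c: "continuous_on {0..<r} x" and inj: "inj_on x {0..<r}"
    using h unfolding homeomorphism_def by (auto intro: inj_on_inverseI)
  have iv: "is_interval {0..<r::real}" by (simp add: is_interval_ci is_interval_co)
  have im: "x ` {0..<r} = {0..<r}" using PLF_image[OF assms] .
  have "\<not> strict_antimono_on {0..<r} x"
  proof
    assume anti: "strict_antimono_on {0..<r} x"
    have x0: "x 0 \<in> {0..<r}" using im r_pos by auto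
    let ?y = "(x 0 + r) / 2"
    have "?y \<in> {0..<r}" using x0 by auto
    then obtain s where s: "s \<in> {0..<r}" "x s = ?y" using im by (metis imageE)
    have "x s \<le> x 0"
    proof (cases "s = 0")
      case False
      then have "x s < x 0" using anti s(1) r_pos unfolding monotone_on_def by auto
      then show ?thesis by simp
    qed simp
    then show False using s x0 by auto
  qed
  then show ?thesis using injective_eq_monotone_map[OF iv c] inj by auto
qed

lemma PLF_smono:
  assumes "x \<in> PLF r \<Lambda> A"
  shows "strict_mono x"
proof (rule strict_monoI)
  fix s t :: real assume st: "s < t"
  have im: "\<And>u. u \<in> {0..<r} \<Longrightarrow> x u \<in> {0..<r}" using PLF_image[OF assms] by auto
  have so: "strict_mono_on {0..<r} x" using PLF_smono_on[OF assms] .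
  show "x s < x t"
  proof (cases "s \<in> {0..<r}")
    case True
    show ?thesis
    proof (cases "t \<in> {0..<r}")
      case True2: True
      then show ?thesis using True so st unfolding monotone_on_def by auto
    next
      case False
      then have "x t = t" "t \<ge> r" using PLF_out[OF assms] True st by auto
      then show ?thesis using im[OF True] by auto
    qed
  next
    case False
    then have xs: "x s = s" using PLF_out[OF assms] by auto
    show ?thesis
    proof (cases "t \<in> {0..<r}")
      case True
      then have "s < 0" using False st by auto
      then show ?thesis using xs im[OF True] by auto
    next
      case False2: False
      then show ?thesis using xs st PLF_out[OF assms] by auto
    qed
  qed
qed

lemma PLF_zero:
  assumes "x \<in> PLF r \<Lambda> A"
  shows "x 0 = 0"
proof -
  obtain s where s: "s \<in> {0..<r}" "x s = 0" using PLF_image[OF assms] r_pos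
    by (metis atLeastLessThan_iff imageE order_refl)
  have "s = 0"
  proof (rule ccontr)
    assume "s \<noteq> 0" then have "0 < s" using s by auto
    then have "x 0 < x s" using strict_monoD[OF PLF_smono[OF assms], of 0 s] by simp
    moreover have "x 0 \<in> {0..<r}" using PLF_image[OF assms] r_pos by (metis atLeastLessThan_iff image_eqI order_refl)
    ultimately show False using s by auto
  qed
  then show ?thesis using s by simp
qed

lemma PLF_id: "id \<in> PLF r \<Lambda> A"
proof -
  have "homeomorphism {0..<r} {0..<r} id id" using homeomorphism_ident[of "{0..<r}"] by (simp add: id_def)
  moreover have "cutset id {0}" unfolding cutset_def using A_zero r_pos Lam_one by auto
  ultimately show ?thesis unfolding PLF_iff by auto
qed

lemma PLF_inverse:
  assumes "x \<in> PLF r \<Lambda> A"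
  shows "\<exists>x'\<in>PLF r \<Lambda> A. x' \<circ> x = id \<and> x \<circ> x' = id"
proof -
  obtain y where h: "homeomorphism {0..<r} {0..<r} x y" using PLF_homeo[OF assms] by auto
  obtain P where P: "cutset x P" using assms PLF_iff by auto
  define x' where "x' t = (if t \<in> {0..<r} then y t else t)" for t
  have hy: "\<And>t. t \<in> {0..<r} \<Longrightarrow> y (x t) = t" "\<And>t. t \<in> {0..<r} \<Longrightarrow> x (y t) = t"
    "\<And>t. t \<in> {0..<r} \<Longrightarrow> y t \<in> {0..<r}" "\<And>t. t \<in> {0..<r} \<Longrightarrow> x t \<in> {0..<r}"
    using h unfolding homeomorphism_def by auto
  have out: "\<And>t. t \<notin> {0..<r} \<Longrightarrow> x t = t" using PLF_out[OF assms] .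
  have c1: "x' \<circ> x = id"
  proof
    fix t show "(x' \<circ> x) t = id t"
    proof (cases "t \<in> {0..<r}")
      case True
      then have "x t \<in> {0..<r}" by (rule hy(4))
      with True show ?thesis unfolding x'_def using hy(1) by simp
    next
      case False
      then show ?thesis by (auto simp add: x'_def out)
    qed
  qed
  have c2: "x \<circ> x' = id"
  proof
    fix t show "(x \<circ> x') t = id t"
      by (cases "t \<in> {0..<r}") (auto simp: x'_def hy out)
  qed
  have sm: "strict_mono x" using PLF_smono[OF assms] .
  have x'x: "\<And>t. x' (x t) = t" using c1 by (metis comp_apply id_apply)
  have xx': "\<And>t. x (x' t) = t" using c2 by (metis comp_apply id_apply)
  have hom: "homeomorphism {0..<r} {0..<r} x' x"
    by (rule homeomorphism_cong[OF homeomorphism_symD[OF h]]) (auto simp: x'_def)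
  have cut: "cutset x' (x ` P)"
    unfolding cutset_def
  proof (intro conjI ballI)
    show "finite (x ` P)" using P unfolding cutset_def by auto
    show "x ` P \<subseteq> A \<inter> {0..<r}" using P hy(4) unfolding cutset_def by auto
    show "0 \<in> x ` P" using P PLF_zero[OF assms] unfolding cutset_def by force
    show "x' ` x ` P \<subseteq> A" using P x'x unfolding cutset_def by auto
  next
    fix p' assume "p' \<in> x ` P"
    then obtain p where p: "p \<in> P" "p' = x p" by auto
    obtain l where l: "l \<in> \<Lambda>" "\<forall>t\<in>{p..<r}. (\<forall>q\<in>P. q \<le> p \<or> t < q) \<longrightarrow> x t = x p + l * (t - p)"
      using P p(1) unfolding cutset_def by blast
    have lpos: "l > 0" using l(1) Lam_pos by auto
    show "\<exists>l\<in>\<Lambda>. \<forall>t\<in>{p'..<r}. (\<forall>q\<in>x ` P. q \<le> p' \<or> t < q) \<longrightarrow> x' t = x' p' + l * (t - p')"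
    proof (intro bexI[OF _ Lam_inv[OF l(1)]] ballI impI)
      fix t assume t: "t \<in> {p'..<r}" "\<forall>q\<in>x ` P. q \<le> p' \<or> t < q"
      define s where "s = x' t"
      have xs: "x s = t" using xx' s_def by simp
      have pr: "p \<in> {0..<r}" using P p(1) unfolding cutset_def by auto
      have "0 \<le> x p" using hy(4)[OF pr] by simp
      then have tr: "t \<in> {0..<r}" using t p by auto
      have sr: "s \<in> {0..<r}" using s_def x'_def hy(3)[OF tr] tr by simp
      have sp: "p \<le> s"
      proof (rule ccontr)
        assume "\<not> p \<le> s" then have "x s < x p" using strict_monoD[OF sm, of s p] by simp
        then show False using xs t p by auto
      qed
      have cond: "\<forall>q\<in>P. q \<le> p \<or> s < q"
      proof
        fix q assume q: "q \<in> P"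
        show "q \<le> p \<or> s < q"
        proof (rule ccontr)
          assume "\<not> (q \<le> p \<or> s < q)"
          then have "p < q" "q \<le> s" by auto
          then have "x p < x q" "x q \<le> x s" using strict_monoD[OF sm, of p q] strict_monoD[OF sm, of q s] by (auto simp: le_less)
          then show False using t(2) q p xs by force
        qed
      qed
      have "t = x p + l * (s - p)" using l(2) sp sr cond xs by force
      then have "s = p + (t - x p) / l" using lpos by (simp add: field_simps)
      then show "x' t = x' p' + inverse l * (t - p')"
        using s_def p x'x by (simp add: divide_inverse mult.commute)
    qed
  qed
  have "x' \<in> PLF r \<Lambda> A" unfolding PLF_iff using hom cut by (auto simp: x'_def)
  then show ?thesis using c1 c2 by auto
qed

lemma PLF_comp:
  assumes x: "x \<in> PLF r \<Lambda> A" and z: "z \<in> PLF r \<Lambda> A"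
  shows "z \<circ> x \<in> PLF r \<Lambda> A"
proof -
  obtain hx where hx: "homeomorphism {0..<r} {0..<r} x hx" using PLF_homeo[OF x] by auto
  obtain hz where hz: "homeomorphism {0..<r} {0..<r} z hz" using PLF_homeo[OF z] by auto
  obtain Px where Px: "cutset x Px" using x PLF_iff by auto
  obtain Pz where Pz: "cutset z Pz" using z PLF_iff by auto
  obtain x' where x': "x' \<in> PLF r \<Lambda> A" "x' \<circ> x = id" "x \<circ> x' = id" using PLF_inverse[OF x] by auto
  have xx': "\<And>t. x (x' t) = t" using x'(3) by (metis comp_apply id_apply)
  have smx: "strict_mono x" using PLF_smono[OF x] .
  have imx: "\<And>t. t \<in> {0..<r} \<Longrightarrow> x t \<in> {0..<r}" using PLF_image[OF x] by auto
  have imx': "\<And>t. t \<in> {0..<r} \<Longrightarrow> x' t \<in> {0..<r}" using PLF_image[OF x'(1)] by auto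
  have imz: "\<And>t. t \<in> {0..<r} \<Longrightarrow> z t \<in> {0..<r}" using PLF_image[OF z] by auto
  define Q where "Q = Px \<union> x' ` Pz"
  have Qr: "Q \<subseteq> A \<inter> {0..<r}"
  proof
    fix q assume "q \<in> Q"
    then show "q \<in> A \<inter> {0..<r}"
    proof (unfold Q_def, elim UnE)
      assume "q \<in> Px" then show ?thesis using Px unfolding cutset_def by auto
    next
      assume "q \<in> x' ` Pz"
      then obtain q' where q': "q' \<in> Pz" "q = x' q'" by auto
      have "q' \<in> A" "q' \<in> {0..<r}" using Pz q'(1) unfolding cutset_def by auto
      then show ?thesis using q' PLF_A[OF x'(1)] imx' by auto
    qed
  qed
  have cut: "cutset (z \<circ> x) Q"
    unfolding cutset_def
  proof (intro conjI ballI)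
    show "finite Q" using Px Pz unfolding cutset_def Q_def by auto
    show "Q \<subseteq> A \<inter> {0..<r}" by (rule Qr)
    show "0 \<in> Q" using Px unfolding cutset_def Q_def by auto
    show "(z \<circ> x) ` Q \<subseteq> A"
    proof
      fix u assume "u \<in> (z \<circ> x) ` Q"
      then obtain q where q: "q \<in> Q" "u = z (x q)" by auto
      have "q \<in> A" "q \<in> {0..<r}" using q(1) Qr by auto
      then show "u \<in> A" using q(2) PLF_A[OF x] PLF_A[OF z] imx by auto
    qed
  next
    fix p assume pQ: "p \<in> Q"
    have pr: "p \<in> {0..<r}" using pQ Qr by auto
    obtain l1 where l1: "l1 \<in> \<Lambda>" "\<forall>t\<in>{p..<r}. (\<forall>q\<in>Px. q \<le> p \<or> t < q) \<longrightarrow> x t = x p + l1 * (t - p)"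
      using cut_local[OF Px pr] by blast
    obtain l2 where l2: "l2 \<in> \<Lambda>" "\<forall>t\<in>{x p..<r}. (\<forall>q\<in>Pz. q \<le> x p \<or> t < q) \<longrightarrow> z t = z (x p) + l2 * (t - x p)"
      using cut_local[OF Pz imx[OF pr]] by blast
    show "\<exists>l\<in>\<Lambda>. \<forall>t\<in>{p..<r}. (\<forall>q\<in>Q. q \<le> p \<or> t < q) \<longrightarrow> (z \<circ> x) t = (z \<circ> x) p + l * (t - p)"
    proof (intro bexI[OF _ Lam_mult[OF l2(1) l1(1)]] ballI impI)
      fix t assume t: "t \<in> {p..<r}" "\<forall>q\<in>Q. q \<le> p \<or> t < q"
      have xt: "x t = x p + l1 * (t - p)" using l1(2) t unfolding Q_def by auto
      have tr: "t \<in> {0..<r}" using t pr by auto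
      have xtr: "x t \<in> {x p..<r}"
      proof -
        have "x p \<le> x t" using strict_monoD[OF smx, of p t] t by (cases "p = t") auto
        then show ?thesis using imx[OF tr] by auto
      qed
      have cz: "\<forall>q\<in>Pz. q \<le> x p \<or> x t < q"
      proof
        fix q assume q: "q \<in> Pz"
        show "q \<le> x p \<or> x t < q"
        proof (rule ccontr)
          assume "\<not> (q \<le> x p \<or> x t < q)"
          then have a: "x p < x (x' q)" "x (x' q) \<le> x t" using xx' by auto
          have "p < x' q"
          proof (rule ccontr)
            assume "\<not> p < x' q"
            then have "x (x' q) \<le> x p" using strict_monoD[OF smx, of "x' q" p] by (cases "x' q = p") auto
            then show False using a by auto
          qed
          moreover have "x' q \<le> t"
          proof (rule ccontr)
            assume "\<not> x' q \<le> t"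
            then have "x t < x (x' q)" using strict_monoD[OF smx, of t "x' q"] by auto
            then show False using a by auto
          qed
          moreover have "x' q \<in> Q" using q unfolding Q_def by auto
          ultimately show False using t(2) by force
        qed
      qed
      have "z (x t) = z (x p) + l2 * (x t - x p)" using l2(2) xtr cz by blast
      then show "(z \<circ> x) t = (z \<circ> x) p + l2 * l1 * (t - p)" using xt by simp
    qed
  qed
  have hom: "homeomorphism {0..<r} {0..<r} (z \<circ> x) (hx \<circ> hz)"
    using homeomorphism_compose[OF hx hz] .
  show ?thesis unfolding PLF_iff using hom cut PLF_out[OF x] PLF_out[OF z] by auto
qed

lemma PLF_group: "group (PLFgroup r \<Lambda> A)"
proof (rule groupI)
  fix x y assume "x \<in> carrier (PLFgroup r \<Lambda> A)" "y \<in> carrier (PLFgroup r \<Lambda> A)"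
  then show "x \<otimes>\<^bsub>PLFgroup r \<Lambda> A\<^esub> y \<in> carrier (PLFgroup r \<Lambda> A)"
    by (simp add: PLFgroup_def PLF_comp)
next
  show "\<one>\<^bsub>PLFgroup r \<Lambda> A\<^esub> \<in> carrier (PLFgroup r \<Lambda> A)" by (simp add: PLFgroup_def PLF_id)
next
  fix x y z
  show "x \<otimes>\<^bsub>PLFgroup r \<Lambda> A\<^esub> y \<otimes>\<^bsub>PLFgroup r \<Lambda> A\<^esub> z =
    x \<otimes>\<^bsub>PLFgroup r \<Lambda> A\<^esub> (y \<otimes>\<^bsub>PLFgroup r \<Lambda> A\<^esub> z)"
    by (simp add: PLFgroup_def o_assoc)
next
  fix x show "\<one>\<^bsub>PLFgroup r \<Lambda> A\<^esub> \<otimes>\<^bsub>PLFgroup r \<Lambda> A\<^esub> x = x" by (simp add: PLFgroup_def)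
next
  fix x assume "x \<in> carrier (PLFgroup r \<Lambda> A)"
  then show "\<exists>y\<in>carrier (PLFgroup r \<Lambda> A). y \<otimes>\<^bsub>PLFgroup r \<Lambda> A\<^esub> x = \<one>\<^bsub>PLFgroup r \<Lambda> A\<^esub>"
    using PLF_inverse[of x] by (auto simp: PLFgroup_def)
qed


lemma PLF_restr:
  assumes c: "c \<in> PLF r \<Lambda> A" and u: "u \<in> A" "0 \<le> u" and v: "v \<in> A" "v < r" "u < v"
    and cu: "c u = u" and cv: "c v = v"
  shows "(\<lambda>t. if u \<le> t \<and> t < v then c t else t) \<in> PLF r \<Lambda> A"
proof -
  define f where "f = (\<lambda>t. if u \<le> t \<and> t < v then c t else t)"
  obtain c' where c': "c' \<in> PLF r \<Lambda> A" "c' \<circ> c = id" "c \<circ> c' = id" using PLF_inverse[OF c] by auto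
  have cc': "\<And>t. c (c' t) = t" and c'c: "\<And>t. c' (c t) = t" using c'(2,3) by (metis comp_apply id_apply)+
  have c'u: "c' u = u" using c'c[of u] cu by simp
  have c'v: "c' v = v" using c'c[of v] cv by simp
  define f' where "f' = (\<lambda>t. if u \<le> t \<and> t < v then c' t else t)"
  have smc: "strict_mono c" using PLF_smono[OF c] .
  have smc': "strict_mono c'" using PLF_smono[OF c'(1)] .
  have mapc: "\<And>t. u \<le> t \<Longrightarrow> t < v \<Longrightarrow> u \<le> c t \<and> c t < v"
  proof -
    fix t assume t: "u \<le> t" "t < v"
    have "c u \<le> c t" using strict_monoD[OF smc, of u t] t by (cases "u = t") auto
    moreover have "c t < c v" using strict_monoD[OF smc] t by auto
    ultimately show "u \<le> c t \<and> c t < v" using cu cv by simp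
  qed
  have mapc': "\<And>t. u \<le> t \<Longrightarrow> t < v \<Longrightarrow> u \<le> c' t \<and> c' t < v"
  proof -
    fix t assume t: "u \<le> t" "t < v"
    have "c' u \<le> c' t" using strict_monoD[OF smc', of u t] t by (cases "u = t") auto
    moreover have "c' t < c' v" using strict_monoD[OF smc'] t by auto
    ultimately show "u \<le> c' t \<and> c' t < v" using c'u c'v by simp
  qed
  have ff': "\<And>t. f (f' t) = t"
  proof -
    fix t show "f (f' t) = t"
      using mapc'[of t] cc'[of t] unfolding f_def f'_def by auto
  qed
  have f'f: "\<And>t. f' (f t) = t"
  proof -
    fix t show "f' (f t) = t"
      using mapc[of t] c'c[of t] unfolding f_def f'_def by auto
  qed
  have fS: "\<And>t. t \<in> {0..<r} \<Longrightarrow> f t \<in> {0..<r}"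
    using mapc u v unfolding f_def by fastforce
  have f'S: "\<And>t. t \<in> {0..<r} \<Longrightarrow> f' t \<in> {0..<r}"
    using mapc' u v unfolding f'_def by fastforce
  obtain hc where hc: "homeomorphism {0..<r} {0..<r} c hc" using PLF_homeo[OF c] by auto
  obtain hc' where hc': "homeomorphism {0..<r} {0..<r} c' hc'" using PLF_homeo[OF c'(1)] by auto
  have contf: "continuous_on {0..<r} f"
    unfolding f_def by (rule restr_cont[OF _ cu cv]) (use hc v in \<open>auto simp: homeomorphism_def\<close>)
  have contf': "continuous_on {0..<r} f'"
    unfolding f'_def by (rule restr_cont[OF _ c'u c'v]) (use hc' v in \<open>auto simp: homeomorphism_def\<close>)
  have imf: "f ` {0..<r} = {0..<r}"
  proof
    show "f ` {0..<r} \<subseteq> {0..<r}" using fS by auto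
    show "{0..<r} \<subseteq> f ` {0..<r}"
    proof
      fix t assume "t \<in> {0..<r}"
      then show "t \<in> f ` {0..<r}" using ff'[of t] f'S[of t] by (metis image_eqI)
    qed
  qed
  have imf': "f' ` {0..<r} = {0..<r}"
  proof
    show "f' ` {0..<r} \<subseteq> {0..<r}" using f'S by auto
    show "{0..<r} \<subseteq> f' ` {0..<r}"
    proof
      fix t assume "t \<in> {0..<r}"
      then show "t \<in> f' ` {0..<r}" using f'f[of t] fS[of t] by (metis image_eqI)
    qed
  qed
  have hom: "homeomorphism {0..<r} {0..<r} f f'"
    unfolding homeomorphism_def using imf imf' contf contf' ff' f'f by auto
  have out: "\<forall>t. t \<notin> {0..<r} \<longrightarrow> f t = t" using u v unfolding f_def by auto
  obtain P where P: "cutset c P" using c PLF_iff by auto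
  define P' where "P' = (P \<inter> {u..<v}) \<union> {0, u, v}"
  have P'A: "P' \<subseteq> A \<inter> {0..<r}" using P u v A_zero r_pos unfolding P'_def cutset_def by auto
  have fA: "\<And>t. t \<in> A \<Longrightarrow> t \<in> {0..<r} \<Longrightarrow> f t \<in> A"
    unfolding f_def using PLF_A[OF c] by auto
  have cut: "cutset f P'"
    unfolding cutset_def
  proof (intro conjI ballI)
    show "finite P'" using P unfolding P'_def cutset_def by auto
    show "P' \<subseteq> A \<inter> {0..<r}" by (rule P'A)
    show "0 \<in> P'" unfolding P'_def by auto
    show "f ` P' \<subseteq> A"
    proof
      fix y assume "y \<in> f ` P'"
      then obtain q where q: "q \<in> P'" "y = f q" by auto
      then have "q \<in> A" "q \<in> {0..<r}" using P'A by auto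
      then show "y \<in> A" using fA q(2) by simp
    qed
  next
    fix p assume pP: "p \<in> P'"
    have pr: "p \<in> {0..<r}" using pP P'A by auto
    show "\<exists>l\<in>\<Lambda>. \<forall>t\<in>{p..<r}. (\<forall>q\<in>P'. q \<le> p \<or> t < q) \<longrightarrow> f t = f p + l * (t - p)"
    proof (cases "p < u \<or> v \<le> p")
      case True
      show ?thesis
      proof (intro bexI[OF _ Lam_one] ballI impI)
        fix t assume t: "t \<in> {p..<r}" "\<forall>q\<in>P'. q \<le> p \<or> t < q"
        have uP: "u \<in> P'" "v \<in> P'" unfolding P'_def by auto
        have "f t = t \<and> f p = p"
        proof (cases "p < u")
          case True
          then have "t < u" using t(2) uP(1) by force
          then show ?thesis using True unfolding f_def by auto
        next
          case False
          then have "v \<le> p" using \<open>p < u \<or> v \<le> p\<close> by auto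
          then show ?thesis using t unfolding f_def by auto
        qed
        then show "f t = f p + 1 * (t - p)" by simp
      qed
    next
      case False
      then have puv: "u \<le> p" "p < v" by auto
      obtain l where l: "l \<in> \<Lambda>" "\<forall>t\<in>{p..<r}. (\<forall>q\<in>P. q \<le> p \<or> t < q) \<longrightarrow> c t = c p + l * (t - p)"
        using cut_local[OF P pr] by blast
      show ?thesis
      proof (intro bexI[OF _ l(1)] ballI impI)
        fix t assume t: "t \<in> {p..<r}" "\<forall>q\<in>P'. q \<le> p \<or> t < q"
        have tv: "t < v" using t(2) unfolding P'_def using puv by force
        have cond: "\<forall>q\<in>P. q \<le> p \<or> t < q"
        proof
          fix q assume q: "q \<in> P"
          show "q \<le> p \<or> t < q"
          proof (rule ccontr)
            assume "\<not> (q \<le> p \<or> t < q)"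
            then have "q \<in> P'" "p < q" "q \<le> t" using q puv tv unfolding P'_def by auto
            then show False using t(2) by force
          qed
        qed
        have "c t = c p + l * (t - p)" using l(2) t(1) cond by blast
        then show "f t = f p + l * (t - p)" using puv tv t(1) unfolding f_def by auto
      qed
    qed
  qed
  show ?thesis unfolding PLF_iff f_def[symmetric] using hom out cut by auto
qed

end

lemma supp_map: "inj f \<Longrightarrow> t \<in> supp f \<Longrightarrow> f t \<in> supp f"
  unfolding supp_def by (auto dest: injD)

sublocale plf \<subseteq> GG: group "PLFgroup r \<Lambda> A" by (rule PLF_group)

context plf begin

lemma carrier_eq: "carrier (PLFgroup r \<Lambda> A) = PLF r \<Lambda> A" by (simp add: PLFgroup_def)
lemma mult_eq: "x \<otimes>\<^bsub>PLFgroup r \<Lambda> A\<^esub> y = y \<circ> x" by (simp add: PLFgroup_def)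
lemma one_eq: "\<one>\<^bsub>PLFgroup r \<Lambda> A\<^esub> = id" by (simp add: PLFgroup_def)

lemma inv_fun:
  assumes "x \<in> PLF r \<Lambda> A"
  shows "inv\<^bsub>PLFgroup r \<Lambda> A\<^esub> x \<in> PLF r \<Lambda> A"
    "\<And>t. x ((inv\<^bsub>PLFgroup r \<Lambda> A\<^esub> x) t) = t" "\<And>t. (inv\<^bsub>PLFgroup r \<Lambda> A\<^esub> x) (x t) = t"
proof -
  have xc: "x \<in> carrier (PLFgroup r \<Lambda> A)" using assms carrier_eq by simp
  show "inv\<^bsub>PLFgroup r \<Lambda> A\<^esub> x \<in> PLF r \<Lambda> A" using GG.inv_closed[OF xc] carrier_eq by simp
  have 1: "x \<circ> inv\<^bsub>PLFgroup r \<Lambda> A\<^esub> x = id" using GG.l_inv[OF xc] by (simp add: mult_eq one_eq)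
  have 2: "inv\<^bsub>PLFgroup r \<Lambda> A\<^esub> x \<circ> x = id" using GG.r_inv[OF xc] by (simp add: mult_eq one_eq)
  fix t
  show "x ((inv\<^bsub>PLFgroup r \<Lambda> A\<^esub> x) t) = t" using 1 by (metis comp_apply id_apply)
  show "(inv\<^bsub>PLFgroup r \<Lambda> A\<^esub> x) (x t) = t" using 2 by (metis comp_apply id_apply)
qed

lemma pos_map:
  assumes "x \<in> PLF r \<Lambda> A" "t \<in> {0<..<r}"
  shows "x t \<in> {0<..<r}"
proof -
  have "x 0 < x t" using strict_monoD[OF PLF_smono[OF assms(1)], of 0 t] assms(2) by simp
  moreover have "x t \<in> {0..<r}" using PLF_image[OF assms(1)] assms(2) by auto
  ultimately show ?thesis using PLF_zero[OF assms(1)] by auto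
qed

end

locale lem46 = plf +
  fixes a b d :: "real \<Rightarrow> real" and \<alpha>0 :: real
  assumes a_up: "a \<in> PLF_up r \<Lambda> A" and a_supp: "supp a = {0<..<r}"
    and alpha0: "\<alpha>0 \<in> {0<..<r} \<inter> A"
    and b_up: "b \<in> PLF_up r \<Lambda> A" and b_supp: "supp b = {\<alpha>0<..<a \<alpha>0}"
    and d_in: "d \<in> PLF_on r \<Lambda> A {\<alpha>0<..<a \<alpha>0}"
    and d_cent: "centralizer (PLFgroup r \<Lambda> A) (PLF_on r \<Lambda> A {\<alpha>0<..<a \<alpha>0}) {b}
                 = generate (PLFgroup r \<Lambda> A) {d}"
begin

definition g :: "int \<Rightarrow> real \<Rightarrow> real" where "g k = a [^]\<^bsub>PLFgroup r \<Lambda> A\<^esub> k"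
definition ig :: "int \<Rightarrow> real \<Rightarrow> real" where "ig k = inv\<^bsub>PLFgroup r \<Lambda> A\<^esub> (g k)"
definition \<alpha> :: "int \<Rightarrow> real" where "\<alpha> k = g k \<alpha>0"
definition B :: "int \<Rightarrow> real \<Rightarrow> real" where
  "B k = ig k \<otimes>\<^bsub>PLFgroup r \<Lambda> A\<^esub> b \<otimes>\<^bsub>PLFgroup r \<Lambda> A\<^esub> g k"
definition D :: "int \<Rightarrow> real \<Rightarrow> real" where
  "D k = ig k \<otimes>\<^bsub>PLFgroup r \<Lambda> A\<^esub> d \<otimes>\<^bsub>PLFgroup r \<Lambda> A\<^esub> g k"

lemma a_in: "a \<in> PLF r \<Lambda> A" using a_up unfolding PLF_up_def by auto
lemma b_in: "b \<in> PLF r \<Lambda> A" using b_up unfolding PLF_up_def by auto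
lemma d_in': "d \<in> PLF r \<Lambda> A" using d_in unfolding PLF_on_def by auto
lemma a_c: "a \<in> carrier (PLFgroup r \<Lambda> A)" using a_in carrier_eq by simp
lemma g_in: "g k \<in> PLF r \<Lambda> A" using GG.int_pow_closed[OF a_c] carrier_eq g_def by simp
lemma ig_in: "ig k \<in> PLF r \<Lambda> A" using inv_fun(1)[OF g_in] ig_def by simp
lemma g_ig: "g k (ig k t) = t" using inv_fun(2)[OF g_in] ig_def by simp
lemma ig_g: "ig k (g k t) = t" using inv_fun(3)[OF g_in] ig_def by simp
lemma g_sm: "strict_mono (g k)" using PLF_smono[OF g_in] .

lemma g_suc1: "g (k + 1) = a \<circ> g k"
  using GG.int_pow_mult[OF a_c, of k 1] GG.int_pow_1[OF a_c] unfolding g_def mult_eq by simp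
lemma g_suc2: "g (k + 1) = g k \<circ> a"
  using GG.int_pow_mult[OF a_c, of 1 k] GG.int_pow_1[OF a_c] unfolding g_def mult_eq by (simp add: add.commute)

lemma alpha_suc: "\<alpha> (k + 1) = a (\<alpha> k)" unfolding \<alpha>_def g_suc1 by simp
lemma alpha_suc2: "\<alpha> (k + 1) = g k (a \<alpha>0)" unfolding \<alpha>_def g_suc2 by simp

lemma alpha_pos: "\<alpha> k \<in> {0<..<r}" unfolding \<alpha>_def using pos_map[OF g_in] alpha0 by auto

lemma a_gt: assumes "t \<in> {0<..<r}" shows "t < a t"
proof -
  have "t \<in> {0..<r}" using assms by auto
  then have "a t \<ge> t" using a_up unfolding PLF_up_def by blast
  moreover have "t \<in> supp a" using a_supp assms by simp
  then have "a t \<noteq> t" unfolding supp_def by simp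
  ultimately show ?thesis by simp
qed

lemma alpha_lt_suc: "\<alpha> k < \<alpha> (k + 1)" using a_gt[OF alpha_pos] alpha_suc by simp

lemma alpha_mono_n: "\<alpha> i < \<alpha> (i + 1 + int n)"
proof (induction n)
  case 0 then show ?case using alpha_lt_suc by simp
next
  case (Suc n)
  have "\<alpha> (i + 1 + int n) < \<alpha> (i + 1 + int n + 1)" by (rule alpha_lt_suc)
  moreover have "i + 1 + int (Suc n) = i + 1 + int n + 1" by simp
  ultimately show ?case using Suc.IH by (metis less_trans)
qed

lemma alpha_less: assumes "i < j" shows "\<alpha> i < \<alpha> j"
proof -
  have "i + 1 + int (nat (j - i - 1)) = j" using assms by simp
  then show ?thesis using alpha_mono_n[of i "nat (j - i - 1)"] by simp
qed

lemma alpha_le: "i \<le> j \<Longrightarrow> \<alpha> i \<le> \<alpha> j"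
  using alpha_less[of i j] by (cases "i = j") auto

lemma alpha_A: "\<alpha> k \<in> A" unfolding \<alpha>_def using PLF_A[OF g_in] alpha0 by auto

lemma alpha_small: assumes "\<epsilon> > 0" shows "\<exists>k. \<alpha> k < \<epsilon>"
proof (rule ccontr)
  assume "\<not> (\<exists>k. \<alpha> k < \<epsilon>)"
  then have ge: "\<And>k. \<epsilon> \<le> \<alpha> k" by (simp add: not_less)
  define L where "L = Inf (range \<alpha>)"
  have bdd: "bdd_below (range \<alpha>)" unfolding bdd_below_def using ge by auto
  have Lle: "\<And>k. L \<le> \<alpha> k" unfolding L_def using bdd by (simp add: cInf_lower)
  have Lge: "\<epsilon> \<le> L" unfolding L_def using ge by (auto intro: cInf_greatest)
  have Lr: "L \<in> {0<..<r}" using Lle[of 0] alpha_pos[of 0] Lge assms by auto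
  have "L < a L" using a_gt[OF Lr] .
  then obtain k where k: "\<alpha> k < a L"
    using cInf_less_iff[of "range \<alpha>" "a L"] bdd unfolding L_def by auto
  have "a L \<le> a (\<alpha> (k - 1))"
    using strict_monoD[OF PLF_smono[OF a_in], of L "\<alpha> (k - 1)"] Lle[of "k - 1"]
    by (cases "L = \<alpha> (k - 1)") auto
  also have "a (\<alpha> (k - 1)) = \<alpha> k" using alpha_suc[of "k - 1"] by simp
  finally show False using k by simp
qed

lemma alpha_large: assumes "M < r" shows "\<exists>k. M < \<alpha> k"
proof (rule ccontr)
  assume "\<not> (\<exists>k. M < \<alpha> k)"
  then have le: "\<And>k. \<alpha> k \<le> M" by (simp add: not_less)
  define L where "L = Sup (range \<alpha>)"
  have bdd: "bdd_above (range \<alpha>)" unfolding bdd_above_def using le by auto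
  have Lge: "\<And>k. \<alpha> k \<le> L" unfolding L_def using bdd by (simp add: cSup_upper)
  have Lle: "L \<le> M" unfolding L_def using le by (auto intro: cSup_least)
  have Lr: "L \<in> {0<..<r}" using Lge[of 0] alpha_pos[of 0] Lle assms by auto
  define a' where "a' = inv\<^bsub>PLFgroup r \<Lambda> A\<^esub> a"
  have a'r: "a' L \<in> {0<..<r}" unfolding a'_def using pos_map[OF inv_fun(1)[OF a_in] Lr] .
  have aa': "a (a' L) = L" unfolding a'_def using inv_fun(2)[OF a_in] .
  have "a' L < L" using a_gt[OF a'r] aa' by simp
  then obtain k where k: "a' L < \<alpha> k"
    using less_cSup_iff[of "range \<alpha>" "a' L"] bdd unfolding L_def by auto
  have "a (a' L) < a (\<alpha> k)" using strict_monoD[OF PLF_smono[OF a_in]] k by blast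
  then have "L < \<alpha> (k + 1)" using aa' alpha_suc by simp
  then show False using Lge[of "k + 1"] by simp
qed

lemma B_fun: "B k = g k \<circ> b \<circ> ig k" unfolding B_def mult_eq by (simp add: o_assoc)
lemma D_fun: "D k = g k \<circ> d \<circ> ig k" unfolding D_def mult_eq by (simp add: o_assoc)

lemma supp_conj:
  "t \<in> supp (g k \<circ> f \<circ> ig k) \<longleftrightarrow> ig k t \<in> supp f"
proof -
  have "g k (f (ig k t)) = t \<longleftrightarrow> f (ig k t) = ig k t"
    using g_ig[of k t] ig_g[of k "f (ig k t)"] by metis
  then show ?thesis unfolding supp_def by simp
qed

lemma conj_interval: "ig k t \<in> {\<alpha>0<..<a \<alpha>0} \<longleftrightarrow> t \<in> {\<alpha> k<..<\<alpha> (k + 1)}"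
proof -
  have e: "ig k t \<in> {\<alpha>0<..<a \<alpha>0} \<longleftrightarrow> t \<in> {g k \<alpha>0<..<g k (a \<alpha>0)}"
    by (rule conj_mem[OF g_sm g_ig])
  have "\<alpha> (k + 1) = g k (a \<alpha>0)" by (rule alpha_suc2)
  moreover have "\<alpha> k = g k \<alpha>0" by (simp add: \<alpha>_def)
  ultimately show ?thesis using e by simp
qed

lemma supp_B_iff: "t \<in> supp (B k) \<longleftrightarrow> t \<in> {\<alpha> k<..<\<alpha> (k + 1)}"
proof -
  have "t \<in> supp (B k) \<longleftrightarrow> ig k t \<in> supp b" unfolding B_fun by (rule supp_conj)
  also have "\<dots> \<longleftrightarrow> t \<in> {\<alpha> k<..<\<alpha> (k + 1)}" unfolding b_supp by (rule conj_interval)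
  finally show ?thesis .
qed

lemma supp_B: "supp (B k) = {\<alpha> k<..<\<alpha> (k + 1)}"
  unfolding set_eq_iff by (intro allI supp_B_iff)

lemma supp_D: "supp (D k) \<subseteq> {\<alpha> k<..<\<alpha> (k + 1)}"
proof
  fix t assume "t \<in> supp (D k)"
  then have "ig k t \<in> supp d" unfolding D_fun by (simp only: supp_conj)
  then have "ig k t \<in> {\<alpha>0<..<a \<alpha>0}" using d_in unfolding PLF_on_def by blast
  then show "t \<in> {\<alpha> k<..<\<alpha> (k + 1)}" by (simp only: conj_interval)
qed

lemma B_c: "B k \<in> carrier (PLFgroup r \<Lambda> A)"
  unfolding B_def by (intro GG.m_closed) (use b_in g_in ig_in carrier_eq in auto)
lemma D_c: "D k \<in> carrier (PLFgroup r \<Lambda> A)"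
  unfolding D_def by (intro GG.m_closed) (use d_in' g_in ig_in carrier_eq in auto)

lemma d_b_comm: "d \<otimes>\<^bsub>PLFgroup r \<Lambda> A\<^esub> b = b \<otimes>\<^bsub>PLFgroup r \<Lambda> A\<^esub> d"
proof -
  have "d \<in> generate (PLFgroup r \<Lambda> A) {d}" by (rule generate.incl) simp
  then have "d \<in> centralizer (PLFgroup r \<Lambda> A) (PLF_on r \<Lambda> A {\<alpha>0<..<a \<alpha>0}) {b}" using d_cent by simp
  then show ?thesis unfolding centralizer_def by auto
qed

lemma DB_comm: "D j \<otimes>\<^bsub>PLFgroup r \<Lambda> A\<^esub> B k = B k \<otimes>\<^bsub>PLFgroup r \<Lambda> A\<^esub> D j"
proof (cases "j = k")
  case True
  have gc: "g k \<in> carrier (PLFgroup r \<Lambda> A)" using g_in carrier_eq by simp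
  show ?thesis unfolding True D_def B_def ig_def
  proof (rule GG.comm_conj[OF gc])
    show "d \<in> carrier (PLFgroup r \<Lambda> A)" using d_in' carrier_eq by simp
    show "b \<in> carrier (PLFgroup r \<Lambda> A)" using b_in carrier_eq by simp
    show "d \<otimes>\<^bsub>PLFgroup r \<Lambda> A\<^esub> b = b \<otimes>\<^bsub>PLFgroup r \<Lambda> A\<^esub> d" by (rule d_b_comm)
  qed
next
  case False
  have dis: "supp (D j) \<inter> supp (B k) = {}"
  proof (cases "j < k")
    case True
    then have "\<alpha> (j + 1) \<le> \<alpha> k" using alpha_le by simp
    then show ?thesis using supp_D[of j] supp_B[of k] by auto
  next
    case False
    then have "k < j" using \<open>j \<noteq> k\<close> by simp
    then have "\<alpha> (k + 1) \<le> \<alpha> j" using alpha_le by simp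
    then show ?thesis using supp_D[of j] supp_B[of k] by auto
  qed
  have injD: "inj (D j)" using strict_mono_imp_inj_on[OF PLF_smono[of "D j"]] D_c carrier_eq by auto
  have injB: "inj (B k)" using strict_mono_imp_inj_on[OF PLF_smono[of "B k"]] B_c carrier_eq by auto
  show ?thesis unfolding mult_eq using disj_comm[OF injD injB dis] by (rule sym)
qed

end


context lem46 begin

lemma c_fix:
  assumes c: "c \<in> PLF r \<Lambda> A" and cB: "B k \<circ> c = c \<circ> B k"
  shows "c (\<alpha> k) = \<alpha> k"
proof -
  have smc: "strict_mono c" using PLF_smono[OF c] .
  have iff: "c t \<in> {\<alpha> k<..<\<alpha> (k + 1)} \<longleftrightarrow> t \<in> {\<alpha> k<..<\<alpha> (k + 1)}" for t
  proof -
    have "c t \<in> supp (B k) \<longleftrightarrow> B k (c t) \<noteq> c t" unfolding supp_def by simp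
    also have "B k (c t) = c (B k t)" using cB by (metis comp_apply)
    also have "(c (B k t) \<noteq> c t) \<longleftrightarrow> (B k t \<noteq> t)" using strict_mono_eq[OF smc] by simp
    also have "\<dots> \<longleftrightarrow> t \<in> supp (B k)" unfolding supp_def by simp
    finally show ?thesis unfolding supp_B .
  qed
  show ?thesis
    by (rule fix_point[OF smc PLF_smono[OF inv_fun(1)[OF c]] inv_fun(2)[OF c] inv_fun(3)[OF c]
          alpha_lt_suc iff])
qed

lemma piece_gen:
  assumes c: "c \<in> PLF r \<Lambda> A" and cB: "\<And>k. B k \<circ> c = c \<circ> B k"
  shows "(\<lambda>t. if \<alpha> j \<le> t \<and> t < \<alpha> (j + 1) then c t else t) \<in> generate (PLFgroup r \<Lambda> A) (range D)"
proof -
  define cj where "cj = (\<lambda>t. if \<alpha> j \<le> t \<and> t < \<alpha> (j + 1) then c t else t)"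
  have cfix: "\<And>k. c (\<alpha> k) = \<alpha> k" using c_fix[OF c cB] .
  have cj_in: "cj \<in> PLF r \<Lambda> A"
    unfolding cj_def
    by (rule PLF_restr[OF c alpha_A _ alpha_A _ alpha_lt_suc cfix cfix])
       (use alpha_pos[of j] alpha_pos[of "j + 1"] in auto)
  have injB: "inj (B j)" using strict_mono_imp_inj_on[OF PLF_smono[of "B j"]] B_c carrier_eq by auto
  have Bout: "\<And>t. t \<notin> {\<alpha> j<..<\<alpha> (j + 1)} \<Longrightarrow> B j t = t"
    using supp_B[of j] unfolding supp_def by blast
  have Bmap: "\<And>t. \<alpha> j \<le> t \<Longrightarrow> t < \<alpha> (j + 1) \<Longrightarrow> \<alpha> j \<le> B j t \<and> B j t < \<alpha> (j + 1)"
  proof -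
    fix t assume t: "\<alpha> j \<le> t" "t < \<alpha> (j + 1)"
    show "\<alpha> j \<le> B j t \<and> B j t < \<alpha> (j + 1)"
    proof (cases "t = \<alpha> j")
      case True
      then have "B j t = t" using Bout by auto
      then show ?thesis using t by simp
    next
      case False
      then have "t \<in> supp (B j)" using t supp_B by auto
      then have "B j t \<in> supp (B j)" using supp_map[OF injB] by blast
      then show ?thesis using supp_B by auto
    qed
  qed
  have comm_cj: "B j \<circ> cj = cj \<circ> B j"
  proof
    fix t
    show "(B j \<circ> cj) t = (cj \<circ> B j) t"
    proof (cases "\<alpha> j \<le> t \<and> t < \<alpha> (j + 1)")
      case True
      have "cj (B j t) = c (B j t)" using Bmap True unfolding cj_def by auto
      also have "\<dots> = B j (c t)" using cB[of j] by (metis comp_apply)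
      also have "\<dots> = B j (cj t)" using True unfolding cj_def by auto
      finally show ?thesis by simp
    next
      case False
      then have "B j t = t" "cj t = t" using Bout unfolding cj_def by auto
      then show ?thesis by simp
    qed
  qed
  have gc: "g j \<in> carrier (PLFgroup r \<Lambda> A)" using g_in carrier_eq by simp
  have cjc: "cj \<in> carrier (PLFgroup r \<Lambda> A)" using cj_in carrier_eq by simp
  have bc: "b \<in> carrier (PLFgroup r \<Lambda> A)" using b_in carrier_eq by simp
  have dc: "d \<in> carrier (PLFgroup r \<Lambda> A)" using d_in' carrier_eq by simp
  define e where "e = g j \<otimes>\<^bsub>PLFgroup r \<Lambda> A\<^esub> cj \<otimes>\<^bsub>PLFgroup r \<Lambda> A\<^esub> inv\<^bsub>PLFgroup r \<Lambda> A\<^esub> (g j)"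
  have hyp: "cj \<otimes>\<^bsub>PLFgroup r \<Lambda> A\<^esub> (inv\<^bsub>PLFgroup r \<Lambda> A\<^esub> (g j) \<otimes>\<^bsub>PLFgroup r \<Lambda> A\<^esub> b \<otimes>\<^bsub>PLFgroup r \<Lambda> A\<^esub> g j)
      = (inv\<^bsub>PLFgroup r \<Lambda> A\<^esub> (g j) \<otimes>\<^bsub>PLFgroup r \<Lambda> A\<^esub> b \<otimes>\<^bsub>PLFgroup r \<Lambda> A\<^esub> g j) \<otimes>\<^bsub>PLFgroup r \<Lambda> A\<^esub> cj"
    using comm_cj unfolding B_def ig_def mult_eq by simp
  have eb: "e \<otimes>\<^bsub>PLFgroup r \<Lambda> A\<^esub> b = b \<otimes>\<^bsub>PLFgroup r \<Lambda> A\<^esub> e"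
    unfolding e_def by (rule GG.comm_conj2[OF gc cjc bc hyp])
  have ec: "e \<in> carrier (PLFgroup r \<Lambda> A)" unfolding e_def using gc cjc by simp
  have e_fun: "e = ig j \<circ> cj \<circ> g j" unfolding e_def ig_def mult_eq by (simp add: o_assoc)
  have e_supp: "supp e \<subseteq> {\<alpha>0<..<a \<alpha>0}"
  proof
    fix t assume "t \<in> supp e"
    then have ne: "ig j (cj (g j t)) \<noteq> t" unfolding supp_def e_fun by simp
    have ne2: "cj (g j t) \<noteq> g j t"
    proof
      assume "cj (g j t) = g j t"
      then show False using ne ig_g by simp
    qed
    then have in1: "\<alpha> j \<le> g j t" "g j t < \<alpha> (j + 1)" "c (g j t) \<noteq> g j t" unfolding cj_def
      by (auto split: if_splits)
    then have "g j t \<noteq> \<alpha> j" using cfix by auto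
    then have "g j \<alpha>0 < g j t" "g j t < g j (a \<alpha>0)"
      using in1 alpha_suc2[of j] unfolding \<alpha>_def by auto
    then show "t \<in> {\<alpha>0<..<a \<alpha>0}" using strict_mono_less[OF g_sm] by auto
  qed
  have "e \<in> centralizer (PLFgroup r \<Lambda> A) (PLF_on r \<Lambda> A {\<alpha>0<..<a \<alpha>0}) {b}"
    unfolding centralizer_def PLF_on_def using ec carrier_eq e_supp eb by auto
  then have eg: "e \<in> generate (PLFgroup r \<Lambda> A) {d}" using d_cent by simp
  have "inv\<^bsub>PLFgroup r \<Lambda> A\<^esub> (g j) \<otimes>\<^bsub>PLFgroup r \<Lambda> A\<^esub> e \<otimes>\<^bsub>PLFgroup r \<Lambda> A\<^esub> g j
        \<in> generate (PLFgroup r \<Lambda> A) {inv\<^bsub>PLFgroup r \<Lambda> A\<^esub> (g j) \<otimes>\<^bsub>PLFgroup r \<Lambda> A\<^esub> d \<otimes>\<^bsub>PLFgroup r \<Lambda> A\<^esub> g j}"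
    by (rule GG.conj_generate[OF gc dc eg])
  moreover have "inv\<^bsub>PLFgroup r \<Lambda> A\<^esub> (g j) \<otimes>\<^bsub>PLFgroup r \<Lambda> A\<^esub> e \<otimes>\<^bsub>PLFgroup r \<Lambda> A\<^esub> g j = cj"
    unfolding e_def by (rule GG.conj_back(1)[OF gc cjc])
  moreover have "{inv\<^bsub>PLFgroup r \<Lambda> A\<^esub> (g j) \<otimes>\<^bsub>PLFgroup r \<Lambda> A\<^esub> d \<otimes>\<^bsub>PLFgroup r \<Lambda> A\<^esub> g j} \<subseteq> range D"
    unfolding D_def ig_def by auto
  ultimately have "cj \<in> generate (PLFgroup r \<Lambda> A) (range D)"
    using GG.mono_generate by blast
  then show ?thesis unfolding cj_def .
qed

end


context lem46 begin

lemma cent_sub: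
  assumes cc: "c \<in> centralizer (PLFgroup r \<Lambda> A) (carrier (PLFgroup r \<Lambda> A)) (range B)"
  shows "c \<in> generate (PLFgroup r \<Lambda> A) (range D)"
proof -
  have c: "c \<in> PLF r \<Lambda> A" using cc carrier_eq unfolding centralizer_def by auto
  have cB: "\<And>k. B k \<circ> c = c \<circ> B k" using cc unfolding centralizer_def mult_eq by auto
  have cfix: "\<And>k. c (\<alpha> k) = \<alpha> k" using c_fix[OF c cB] .
  have smc: "strict_mono c" using PLF_smono[OF c] .
  obtain P where P: "cutset c P" using c PLF_iff by auto
  have finP: "finite P" and P0: "0 \<in> P" and Pr: "P \<subseteq> {0..<r}" using P unfolding cutset_def by auto
  define m where "m = Min (insert r {q \<in> P. 0 < q})"
  have finM: "finite (insert r {q \<in> P. 0 < q})" using finP by auto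
  have m_in: "m \<in> insert r {q \<in> P. 0 < q}" unfolding m_def by (rule Min_in[OF finM]) simp
  have m_pos: "0 < m" using m_in r_pos by auto
  have m_le: "\<And>q. q \<in> P \<Longrightarrow> 0 < q \<Longrightarrow> m \<le> q" unfolding m_def using Min_le[OF finM] by auto
  have m_r: "m \<le> r" unfolding m_def using Min_le[OF finM] by auto
  obtain l where l: "l \<in> \<Lambda>" "\<forall>t\<in>{0..<r}. (\<forall>q\<in>P. q \<le> 0 \<or> t < q) \<longrightarrow> c t = c 0 + l * (t - 0)"
    using cut_local[OF P, of 0] r_pos by auto
  obtain k0 where k0: "\<alpha> k0 < m" using alpha_small[OF m_pos] by auto
  have lin: "\<And>t. 0 \<le> t \<Longrightarrow> t < m \<Longrightarrow> c t = l * t"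
  proof -
    fix t assume t: "0 \<le> t" "t < m"
    have cond: "\<forall>q\<in>P. q \<le> 0 \<or> t < q"
    proof
      fix q assume q: "q \<in> P"
      show "q \<le> 0 \<or> t < q"
      proof (cases "0 < q")
        case True
        then have "m \<le> q" by (rule m_le[OF q])
        then show ?thesis using t by simp
      qed simp
    qed
    have tr: "t \<in> {0..<r}" using t m_r by simp
    have "c t = c 0 + l * (t - 0)" using l(2) tr cond by blast
    then show "c t = l * t" using PLF_zero[OF c] by simp
  qed
  have "\<alpha> k0 = l * \<alpha> k0" using lin[of "\<alpha> k0"] cfix[of k0] alpha_pos[of k0] k0 by auto
  then have l1: "l = 1" using alpha_pos[of k0] by simp
  have low: "\<And>t. t < \<alpha> k0 \<Longrightarrow> c t = t"
  proof -
    fix t assume t: "t < \<alpha> k0"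
    show "c t = t"
    proof (cases "t < 0")
      case True then show ?thesis using PLF_out[OF c] by auto
    next
      case False then show ?thesis using lin[of t] l1 t k0 by auto
    qed
  qed
  define pm where "pm = Max P"
  have pm_in: "pm \<in> P" unfolding pm_def using Max_in[OF finP] P0 by auto
  have pm_ge: "\<And>q. q \<in> P \<Longrightarrow> q \<le> pm" unfolding pm_def using Max_ge[OF finP] by auto
  have pmr: "pm \<in> {0..<r}" using pm_in Pr by auto
  obtain l2 where l2: "l2 \<in> \<Lambda>" "\<forall>t\<in>{pm..<r}. (\<forall>q\<in>P. q \<le> pm \<or> t < q) \<longrightarrow> c t = c pm + l2 * (t - pm)"
    using cut_local[OF P pmr] by auto
  have lin2: "c t = c pm + l2 * (t - pm)" if t: "pm \<le> t" "t < r" for t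
  proof -
    have cond: "\<forall>q\<in>P. q \<le> pm \<or> t < q" using pm_ge by blast
    have "t \<in> {pm..<r}" using t by simp
    then show ?thesis using l2(2) cond by blast
  qed
  obtain k1 where k1: "pm < \<alpha> k1" using alpha_large[of pm] pmr by auto
  have ak1r: "\<alpha> k1 < r" "\<alpha> (k1 + 1) < r" using alpha_pos[of k1] alpha_pos[of "k1 + 1"] by auto
  have e1: "\<alpha> k1 = c pm + l2 * (\<alpha> k1 - pm)" using lin2[of "\<alpha> k1"] k1 ak1r cfix[of k1] by simp
  have k1': "\<alpha> k1 < \<alpha> (k1 + 1)" by (rule alpha_lt_suc)
  have e2: "\<alpha> (k1 + 1) = c pm + l2 * (\<alpha> (k1 + 1) - pm)"
    using lin2[of "\<alpha> (k1 + 1)"] k1 k1' ak1r cfix[of "k1 + 1"] by simp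
  have "\<alpha> (k1 + 1) - \<alpha> k1 = l2 * (\<alpha> (k1 + 1) - \<alpha> k1)"
    using e1 e2 unfolding right_diff_distrib by linarith
  then have l21: "l2 = 1" using k1' by simp
  have cpm: "c pm = pm" using e1 l21 by simp
  have high: "\<And>t. \<alpha> k1 \<le> t \<Longrightarrow> c t = t"
  proof -
    fix t assume t: "\<alpha> k1 \<le> t"
    show "c t = t"
    proof (cases "t < r")
      case True
      have "pm \<le> t" using t k1 by simp
      then show ?thesis using lin2[of t] l21 cpm True by simp
    next
      case False then show ?thesis using PLF_out[OF c] by simp
    qed
  qed
  define h where "h j = (\<lambda>t. if t < \<alpha> j then c t else t)" for j
  define cj where "cj j = (\<lambda>t. if \<alpha> j \<le> t \<and> t < \<alpha> (j + 1) then c t else t)" for j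
  have step: "h (j + 1) = h j \<otimes>\<^bsub>PLFgroup r \<Lambda> A\<^esub> cj j" for j
    unfolding mult_eq
  proof
    fix t
    show "h (j + 1) t = (cj j \<circ> h j) t"
    proof (cases "t < \<alpha> j")
      case True
      then have "c t < \<alpha> j" using strict_monoD[OF smc True] cfix[of j] by simp
      moreover have "t < \<alpha> (j + 1)" using True alpha_lt_suc[of j] by simp
      ultimately show ?thesis using True unfolding h_def cj_def by auto
    next
      case False
      then show ?thesis unfolding h_def cj_def by auto
    qed
  qed
  have base: "h k0 = \<one>\<^bsub>PLFgroup r \<Lambda> A\<^esub>"
    unfolding one_eq
  proof
    fix t show "h k0 t = id t" unfolding h_def using low by auto
  qed
  have ind: "h (k0 + int n) \<in> generate (PLFgroup r \<Lambda> A) (range D)" for n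
  proof (induction n)
    case 0 then show ?case using base generate.one by simp
  next
    case (Suc n)
    have "cj (k0 + int n) \<in> generate (PLFgroup r \<Lambda> A) (range D)"
      unfolding cj_def by (rule piece_gen[OF c cB])
    then have hn: "h (k0 + int n + 1) \<in> generate (PLFgroup r \<Lambda> A) (range D)"
      unfolding step using Suc.IH by (rule generate.eng[rotated])
    have eq: "k0 + int (Suc n) = k0 + int n + 1" by simp
    show ?case unfolding eq by (rule hn)
  qed
  define j where "j = max k0 k1"
  have "c = h j"
  proof
    fix t show "c t = h j t"
    proof (cases "t < \<alpha> j")
      case True then show ?thesis unfolding h_def by simp
    next
      case False
      then have "\<alpha> k1 \<le> t" using alpha_le[of k1 j] unfolding j_def by auto
      then show ?thesis using high False unfolding h_def by auto
    qed
  qed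
  moreover have jn: "k0 + int (nat (j - k0)) = j" unfolding j_def by simp
  have "h j \<in> generate (PLFgroup r \<Lambda> A) (range D)" using ind[of "nat (j - k0)"] unfolding jn .
  ultimately show ?thesis by simp
qed

lemma gen_sub:
  assumes y: "y \<in> generate (PLFgroup r \<Lambda> A) (range D)"
  shows "y \<in> centralizer (PLFgroup r \<Lambda> A) (carrier (PLFgroup r \<Lambda> A)) (range B)"
proof -
  have Dc: "range D \<subseteq> carrier (PLFgroup r \<Lambda> A)" using D_c by auto
  have "\<forall>k. y \<otimes>\<^bsub>PLFgroup r \<Lambda> A\<^esub> B k = B k \<otimes>\<^bsub>PLFgroup r \<Lambda> A\<^esub> y"
    using y
  proof (induction rule: generate.induct)
    case one
    then show ?case using B_c by simp
  next
    case (incl h)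
    then show ?case using DB_comm by auto
  next
    case (inv h)
    then obtain j where "h = D j" by auto
    then show ?case using GG.comm_inv[OF D_c B_c DB_comm] by simp
  next
    case (eng h1 h2)
    have c1: "h1 \<in> carrier (PLFgroup r \<Lambda> A)" "h2 \<in> carrier (PLFgroup r \<Lambda> A)"
      using GG.generate_in_carrier[OF Dc] eng.hyps by auto
    show ?case
    proof
      fix k
      have "h1 \<otimes>\<^bsub>PLFgroup r \<Lambda> A\<^esub> h2 \<otimes>\<^bsub>PLFgroup r \<Lambda> A\<^esub> B k
          = h1 \<otimes>\<^bsub>PLFgroup r \<Lambda> A\<^esub> (h2 \<otimes>\<^bsub>PLFgroup r \<Lambda> A\<^esub> B k)" using c1 B_c by (simp add: GG.m_assoc)
      also have "\<dots> = h1 \<otimes>\<^bsub>PLFgroup r \<Lambda> A\<^esub> (B k \<otimes>\<^bsub>PLFgroup r \<Lambda> A\<^esub> h2)" using eng.IH(2) by simp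
      also have "\<dots> = (h1 \<otimes>\<^bsub>PLFgroup r \<Lambda> A\<^esub> B k) \<otimes>\<^bsub>PLFgroup r \<Lambda> A\<^esub> h2" using c1 B_c by (simp add: GG.m_assoc)
      also have "\<dots> = (B k \<otimes>\<^bsub>PLFgroup r \<Lambda> A\<^esub> h1) \<otimes>\<^bsub>PLFgroup r \<Lambda> A\<^esub> h2" using eng.IH(1) by simp
      also have "\<dots> = B k \<otimes>\<^bsub>PLFgroup r \<Lambda> A\<^esub> (h1 \<otimes>\<^bsub>PLFgroup r \<Lambda> A\<^esub> h2)" using c1 B_c by (simp add: GG.m_assoc)
      finally show "h1 \<otimes>\<^bsub>PLFgroup r \<Lambda> A\<^esub> h2 \<otimes>\<^bsub>PLFgroup r \<Lambda> A\<^esub> B k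
          = B k \<otimes>\<^bsub>PLFgroup r \<Lambda> A\<^esub> (h1 \<otimes>\<^bsub>PLFgroup r \<Lambda> A\<^esub> h2)" .
    qed
  qed
  moreover have "y \<in> carrier (PLFgroup r \<Lambda> A)" using GG.generate_in_carrier[OF Dc y] .
  ultimately show ?thesis unfolding centralizer_def by auto
qed

theorem main:
  "centralizer (PLFgroup r \<Lambda> A) (carrier (PLFgroup r \<Lambda> A))
      {inv\<^bsub>PLFgroup r \<Lambda> A\<^esub> (a [^]\<^bsub>PLFgroup r \<Lambda> A\<^esub> k) \<otimes>\<^bsub>PLFgroup r \<Lambda> A\<^esub> b \<otimes>\<^bsub>PLFgroup r \<Lambda> A\<^esub> (a [^]\<^bsub>PLFgroup r \<Lambda> A\<^esub> k) | k :: int. True}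
   = generate (PLFgroup r \<Lambda> A)
      {inv\<^bsub>PLFgroup r \<Lambda> A\<^esub> (a [^]\<^bsub>PLFgroup r \<Lambda> A\<^esub> k) \<otimes>\<^bsub>PLFgroup r \<Lambda> A\<^esub> d \<otimes>\<^bsub>PLFgroup r \<Lambda> A\<^esub> (a [^]\<^bsub>PLFgroup r \<Lambda> A\<^esub> k) | k :: int. True}"
proof -
  have rB: "{inv\<^bsub>PLFgroup r \<Lambda> A\<^esub> (a [^]\<^bsub>PLFgroup r \<Lambda> A\<^esub> k) \<otimes>\<^bsub>PLFgroup r \<Lambda> A\<^esub> b \<otimes>\<^bsub>PLFgroup r \<Lambda> A\<^esub> (a [^]\<^bsub>PLFgroup r \<Lambda> A\<^esub> k) | k :: int. True} = range B"
    unfolding B_def[abs_def] ig_def[abs_def] g_def[abs_def] by (simp add: full_SetCompr_eq)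
  have rD: "{inv\<^bsub>PLFgroup r \<Lambda> A\<^esub> (a [^]\<^bsub>PLFgroup r \<Lambda> A\<^esub> k) \<otimes>\<^bsub>PLFgroup r \<Lambda> A\<^esub> d \<otimes>\<^bsub>PLFgroup r \<Lambda> A\<^esub> (a [^]\<^bsub>PLFgroup r \<Lambda> A\<^esub> k) | k :: int. True} = range D"
    unfolding D_def[abs_def] ig_def[abs_def] g_def[abs_def] by (simp add: full_SetCompr_eq)
  show ?thesis unfolding rB rD using cent_sub gen_sub by blast
qed

end


theorem lemma4p6:
  fixes r :: real and \<Lambda> A :: "real set" and a b d :: "real \<Rightarrow> real" and \<alpha>0 :: real
  defines "G \<equiv> PLFgroup r \<Lambda> A"
  assumes r_pos: "r > 0"
    and Lam_pos: "\<Lambda> \<subseteq> {0<..}" and Lam_one: "1 \<in> \<Lambda>"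
    and Lam_mult: "\<And>l m. l \<in> \<Lambda> \<Longrightarrow> m \<in> \<Lambda> \<Longrightarrow> l * m \<in> \<Lambda>"
    and Lam_inv: "\<And>l. l \<in> \<Lambda> \<Longrightarrow> inverse l \<in> \<Lambda>"
    and Lam_nontriv: "\<Lambda> \<noteq> {1}"
    and A_zero: "0 \<in> A"
    and A_add: "\<And>x y. x \<in> A \<Longrightarrow> y \<in> A \<Longrightarrow> x + y \<in> A"
    and A_uminus: "\<And>x. x \<in> A \<Longrightarrow> - x \<in> A"
    and r_A: "r \<in> A"
    and A_scale: "\<And>l x. l \<in> \<Lambda> \<Longrightarrow> x \<in> A \<Longrightarrow> l * x \<in> A"
    and a_up: "a \<in> PLF_up r \<Lambda> A" and a_supp: "supp a = {0<..<r}"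
    and alpha0: "\<alpha>0 \<in> {0<..<r} \<inter> A"
    and b_up: "b \<in> PLF_up r \<Lambda> A" and b_supp: "supp b = {\<alpha>0<..<a \<alpha>0}"
    and d_in: "d \<in> PLF_on r \<Lambda> A {\<alpha>0<..<a \<alpha>0}"
    and d_cent: "centralizer G (PLF_on r \<Lambda> A {\<alpha>0<..<a \<alpha>0}) {b} = generate G {d}"
  shows "centralizer G (carrier G)
           {inv\<^bsub>G\<^esub> (a [^]\<^bsub>G\<^esub> k) \<otimes>\<^bsub>G\<^esub> b \<otimes>\<^bsub>G\<^esub> (a [^]\<^bsub>G\<^esub> k) | k :: int. True}
         = generate G {inv\<^bsub>G\<^esub> (a [^]\<^bsub>G\<^esub> k) \<otimes>\<^bsub>G\<^esub> d \<otimes>\<^bsub>G\<^esub> (a [^]\<^bsub>G\<^esub> k) | k :: int. True}"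
proof -
  have L: "lem46 r \<Lambda> A a b d \<alpha>0"
    unfolding lem46_def plf_def lem46_axioms_def
    using r_pos Lam_pos Lam_one Lam_mult Lam_inv A_zero A_add A_uminus A_scale a_up a_supp alpha0
      b_up b_supp d_in d_cent[unfolded G_def]
    by blast
  show ?thesis using lem46.main[OF L] by (simp only: G_def)
qed

end
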